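(* Consider $N$ agents with $$\dot x_i=\sum_{j=1}^N\alpha_{ij}(y_j-y_i),\qquad y_i=\mathrm{sat}_i(x_i),\qquad i\in\mathcal V=\{1,\dots,N\},$$ where the constant weights $\alpha_{ij}=\alpha_{ji}\ge0$ define an undirected, connected graph, and the saturation levels $s_i>0$ may be equal (homogeneous) or different (heterogeneous). Assume the initial state $x(t_0)$ is not a consensus state, i.e. not all $x_i(t_0)$ are equal. Then the agents achieve consensus if and only if $$\frac1N\Big|\sum_{i=1}^N x_i(t_0)\Big|\le\min_{i\in\mathcal V}s_i .$$
   Context: $\mathrm{sat}_i(x)=\mathrm{sign}(x)\min\{|x|,s_i\}$. The graph is connected if for any two nodes there is a path of edges $\{i,j\}$ with $\alpha_{ij}>0$ joining them. Consensus is achieved if there exists $C\in\mathbb R$ with $\lim_{t\to\infty}x_i(t)=C$ for all $i\in\mathcal V$. *)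

theory Defs
  imports Complex_Main
begin

definition sat :: "real \<Rightarrow> real \<Rightarrow> real" where
  "sat s x = sgn x * min \<bar>x\<bar> s"

definition graph_connected :: "('i \<Rightarrow> 'i \<Rightarrow> real) \<Rightarrow> bool" where
  "graph_connected \<alpha> \<longleftrightarrow> (\<forall>i j. (\<lambda>a b. \<alpha> a b > 0)\<^sup>*\<^sup>* i j)"

definition is_solution ::
  "('i::finite \<Rightarrow> 'i \<Rightarrow> real) \<Rightarrow> ('i \<Rightarrow> real) \<Rightarrow> real \<Rightarrow> (real \<Rightarrow> 'i \<Rightarrow> real) \<Rightarrow> bool" where
  "is_solution \<alpha> s t0 x \<longleftrightarrow>
     (\<forall>t\<ge>t0. \<forall>i. ((\<lambda>\<tau>. x \<tau> i) has_real_derivative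
        (\<Sum>j\<in>UNIV. \<alpha> i j * (sat (s j) (x t j) - sat (s i) (x t i)))) (at t within {t0..}))"

definition achieves_consensus :: "(real \<Rightarrow> 'i \<Rightarrow> real) \<Rightarrow> bool" where
  "achieves_consensus x \<longleftrightarrow> (\<exists>C. \<forall>i. ((\<lambda>t. x t i) \<longlongrightarrow> C) at_top)"

end

theory Submission
  imports Defs "HOL-Analysis.Analysis"
begin

lemma sat_alt: "s \<ge> 0 \<Longrightarrow> sat s x = max (-s) (min x s)"
  by (auto simp: sat_def sgn_if)

lemma hsq_deriv: "((\<lambda>u::real. (max u 0)^2) has_real_derivative 2 * max u 0) (at u)"
proof (cases "u = 0")
  case True
  have "((\<lambda>y. ((max y 0)^2 - (max u 0)^2) / (y - u)) \<longlongrightarrow> 2 * max u 0) (at u)"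
  proof -
    have "((\<lambda>y::real. max y 0) \<longlongrightarrow> max 0 0) (at 0)"
      by (intro tendsto_intros)
    then have "((\<lambda>y::real. max y 0) \<longlongrightarrow> 0) (at 0)" by simp
    moreover have "\<forall>\<^sub>F y in at 0. max y 0 = ((max y 0)^2 - (max 0 0)^2) / (y - (0::real))"
      unfolding eventually_at by (intro exI[of _ 1]) (auto simp: power2_eq_square max_def)
    ultimately have "((\<lambda>y. ((max y 0)^2 - (max 0 0)^2) / (y - (0::real))) \<longlongrightarrow> 0) (at 0)"
      using Lim_transform_eventually by fastforce
    then show ?thesis using True by simp
  qed
  then show ?thesis by (simp add: has_field_derivative_iff)
next
  case False
  show ?thesis
  proof (cases "u > 0")
    case True
    have "DERIV (\<lambda>u. u^2) u :> 2 * u" by (auto intro!: derivative_eq_intros)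
    moreover have "eventually (\<lambda>v. v^2 = (max v 0)^2) (nhds u)"
      using eventually_nhds_in_open[of "{0<..}" u] True by (auto elim!: eventually_mono)
    ultimately show ?thesis using True DERIV_cong_ev[of u u "\<lambda>u. u^2" "\<lambda>u. (max u 0)^2" "2*u" "2*max u 0"]
      by auto
  next
    case False2: False
    then have "u < 0" using False by auto
    have "DERIV (\<lambda>u. 0) u :> 0" by (auto intro!: derivative_eq_intros)
    moreover have "eventually (\<lambda>v. (0::real) = (max v 0)^2) (nhds u)"
      using eventually_nhds_in_open[of "{..<0}" u] \<open>u<0\<close> by (auto elim!: eventually_mono)
    ultimately show ?thesis using \<open>u<0\<close> DERIV_cong_ev[of u u "\<lambda>u. 0" "\<lambda>u. (max u 0)^2" 0 "2*max u 0"]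
      by auto
  qed
qed

definition Phi :: "real \<Rightarrow> real \<Rightarrow> real" where
  "Phi s v = v^2/2 - (max (v - s) 0)^2/2 - (max (-v - s) 0)^2/2"

lemma Phi_deriv:
  assumes "s > 0"
  shows "(Phi s has_real_derivative sat s v) (at v)"
proof -
  have d1: "((\<lambda>v. (max (v - s) 0)^2) has_real_derivative (2 * max (v - s) 0 * 1)) (at v)"
  proof -
    have a: "DERIV (\<lambda>u. (max u 0)^2) (v - s) :> 2 * max (v - s) 0" by (rule hsq_deriv)
    have b: "DERIV (\<lambda>v. v - s) v :> 1" by (auto intro!: derivative_eq_intros)
    from DERIV_chain2[OF a b] show ?thesis by simp
  qed
  have d2: "((\<lambda>v. (max (- v - s) 0)^2) has_real_derivative (2 * max (- v - s) 0 * (- 1))) (at v)"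
  proof -
    have a: "DERIV (\<lambda>u. (max u 0)^2) (- v - s) :> 2 * max (- v - s) 0" by (rule hsq_deriv)
    have b: "DERIV (\<lambda>v. - v - s) v :> - 1" by (auto intro!: derivative_eq_intros)
    from DERIV_chain2[OF a b] show ?thesis by simp
  qed
  have d0: "((\<lambda>v. v^2) has_real_derivative (2 * v)) (at v)"
    by (auto intro!: derivative_eq_intros)
  have "((\<lambda>v. v^2/2 - (max (v - s) 0)^2/2 - (max (-v - s) 0)^2/2) has_real_derivative
     ((2 * v)/2 - (2 * max (v - s) 0 * 1)/2 - (2 * max (- v - s) 0 * (- 1))/2)) (at v)"
    by (rule DERIV_diff[OF DERIV_diff[OF DERIV_cdivide[OF d0] DERIV_cdivide[OF d1]] DERIV_cdivide[OF d2]])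
  moreover have "(2 * v)/2 - (2 * max (v - s) 0 * 1)/2 - (2 * max (- v - s) 0 * (- 1))/2 = sat s v"
    using assms by (auto simp: sat_alt max_def min_def)
  ultimately show ?thesis unfolding Phi_def[abs_def] by simp
qed

lemma Phi_nonneg: "s > 0 \<Longrightarrow> Phi s v \<ge> 0"
proof -
  assume s: "s > 0"
  consider "v \<ge> s" | "v \<le> -s" | "-s < v \<and> v < s" by linarith
  then show ?thesis
  proof cases
    case 1
    then have "max (v - s) 0 = v - s" "max (- v - s) 0 = 0" using s by auto
    then have "Phi s v = v^2/2 - (v - s)^2/2" by (simp add: Phi_def)
    also have "\<dots> = s * (v - s) + s * s / 2" by (simp add: power2_eq_square field_simps)
    finally have "Phi s v = s * (v - s) + s * s / 2" .
    moreover have "s * (v - s) \<ge> 0" using 1 s by simp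
    ultimately show ?thesis using s by simp
  next
    case 2
    then have "max (- v - s) 0 = - v - s" "max (v - s) 0 = 0" using s by auto
    then have "Phi s v = v^2/2 - (- v - s)^2/2" by (simp add: Phi_def)
    also have "\<dots> = s * (- v - s) + s * s / 2" by (simp add: power2_eq_square field_simps)
    finally have "Phi s v = s * (- v - s) + s * s / 2" .
    moreover have "s * (- v - s) \<ge> 0" using 2 s by simp
    ultimately show ?thesis using s by simp
  next
    case 3
    then show ?thesis using s by (simp add: Phi_def max_def)
  qed
qed

locale sys =
  fixes \<alpha> :: "'i::finite \<Rightarrow> 'i \<Rightarrow> real" and s :: "'i \<Rightarrow> real" and t0 :: real
    and x :: "real \<Rightarrow> 'i \<Rightarrow> real"
  assumes symm: "\<And>i j. \<alpha> i j = \<alpha> j i" and nonneg: "\<And>i j. \<alpha> i j \<ge> 0"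
    and spos: "\<And>i. s i > 0" and sol: "is_solution \<alpha> s t0 x"
begin

definition y where "y i t = sat (s i) (x t i)"
definition F where "F i t = (\<Sum>j\<in>UNIV. \<alpha> i j * (y j t - y i t))"

lemma deriv_within: "t \<ge> t0 \<Longrightarrow> ((\<lambda>\<tau>. x \<tau> i) has_real_derivative F i t) (at t within {t0..})"
  using sol unfolding is_solution_def F_def y_def by auto

lemma deriv_at: "t > t0 \<Longrightarrow> ((\<lambda>\<tau>. x \<tau> i) has_real_derivative F i t) (at t)"
  using deriv_within[of t i] at_within_interior[of t "{t0..}"] by simp

lemma cont: "continuous_on {t0..} (\<lambda>\<tau>. x \<tau> i)"
  unfolding continuous_on_eq_continuous_within using deriv_within DERIV_continuous by blast

lemma y_bound: "\<bar>y i t\<bar> \<le> s i"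
  using spos[of i] by (auto simp: y_def sat_alt)

definition B where "B = (\<Sum>i\<in>UNIV. \<Sum>j\<in>UNIV. \<alpha> i j * (s j + s i)) + 1"

lemma B_pos: "B > 0"
proof -
  have "(\<Sum>i\<in>UNIV. \<Sum>j\<in>UNIV. \<alpha> i j * (s j + s i)) \<ge> 0"
    using nonneg spos by (intro sum_nonneg) (simp add: less_imp_le)
  then show ?thesis unfolding B_def by simp
qed

lemma F_bound: "\<bar>F i t\<bar> \<le> B"
proof -
  have "\<bar>F i t\<bar> \<le> (\<Sum>j\<in>UNIV. \<bar>\<alpha> i j * (y j t - y i t)\<bar>)"
    unfolding F_def by (rule sum_abs)
  also have "\<dots> \<le> (\<Sum>j\<in>UNIV. \<alpha> i j * (s j + s i))"
  proof (rule sum_mono)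
    fix j
    have "\<bar>y j t - y i t\<bar> \<le> s j + s i" using y_bound[of j t] y_bound[of i t] by linarith
    then show "\<bar>\<alpha> i j * (y j t - y i t)\<bar> \<le> \<alpha> i j * (s j + s i)"
      using nonneg[of i j] by (simp add: abs_mult mult_left_mono)
  qed
  also have "\<dots> \<le> (\<Sum>i\<in>UNIV. \<Sum>j\<in>UNIV. \<alpha> i j * (s j + s i))"
    by (rule member_le_sum[where f="\<lambda>i. \<Sum>j\<in>UNIV. \<alpha> i j * (s j + s i)"])
      (use nonneg spos in \<open>auto intro!: sum_nonneg simp: less_imp_le\<close>)
  finally show ?thesis unfolding B_def by simp
qed

lemma x_lip:
  assumes "t0 < t" "t \<le> u"
  shows "\<bar>x u i - x t i\<bar> \<le> B * (u - t)"
proof -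
  have "x u i - B * u \<le> x t i - B * t"
    by (rule DERIV_nonpos_imp_nonincreasing[OF assms(2)])
      (use assms F_bound[of i] in \<open>auto intro!: exI derivative_eq_intros deriv_at simp: abs_le_iff\<close>)
  moreover have "- x u i - B * u \<le> - x t i - B * t"
    by (rule DERIV_nonpos_imp_nonincreasing[OF assms(2)])
      (use assms F_bound[of i] in \<open>auto intro!: exI derivative_eq_intros deriv_at simp: abs_le_iff\<close>)
  ultimately show ?thesis by (simp add: abs_le_iff algebra_simps)
qed

lemma sat_lip: "s' \<ge> 0 \<Longrightarrow> \<bar>sat s' a - sat s' b\<bar> \<le> \<bar>a - b\<bar>"
  by (auto simp: sat_alt)

lemma y_lip:
  assumes "t0 < t" "t \<le> u"
  shows "\<bar>y i u - y i t\<bar> \<le> B * (u - t)"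
  using sat_lip[of "s i" "x u i" "x t i"] x_lip[OF assms, of i] spos[of i]
  unfolding y_def by linarith

lemma sumF: "(\<Sum>i\<in>UNIV. F i t) = 0"
proof -
  have "(\<Sum>i\<in>UNIV. F i t) = (\<Sum>i\<in>UNIV. \<Sum>j\<in>UNIV. \<alpha> i j * y j t) - (\<Sum>i\<in>UNIV. \<Sum>j\<in>UNIV. \<alpha> i j * y i t)"
    unfolding F_def by (simp add: algebra_simps sum_subtractf)
  also have "(\<Sum>i\<in>UNIV. \<Sum>j\<in>UNIV. \<alpha> i j * y j t) = (\<Sum>i\<in>UNIV. \<Sum>j\<in>UNIV. \<alpha> i j * y i t)"
    by (subst sum.swap) (simp add: symm)
  finally show ?thesis by simp
qed

lemma sum_const: "t \<ge> t0 \<Longrightarrow> (\<Sum>i\<in>UNIV. x t i) = (\<Sum>i\<in>UNIV. x t0 i)"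
proof -
  assume "t \<ge> t0"
  have "\<exists>c. \<forall>u\<in>{t0..}. (\<Sum>i\<in>UNIV. x u i) = c"
  proof (rule has_field_derivative_zero_constant)
    fix u assume "u \<in> {t0..}"
    then have "((\<lambda>u. \<Sum>i\<in>UNIV. x u i) has_real_derivative (\<Sum>i\<in>UNIV. F i u)) (at u within {t0..})"
      by (intro DERIV_sum deriv_within) auto
    then show "((\<lambda>u. \<Sum>i\<in>UNIV. x u i) has_real_derivative 0) (at u within {t0..})"
      by (simp add: sumF)
  qed auto
  then show ?thesis using \<open>t \<ge> t0\<close> by force
qed

definition V where "V t = (\<Sum>i\<in>UNIV. Phi (s i) (x t i))"

lemma V_nonneg: "V t \<ge> 0"
  unfolding V_def using Phi_nonneg spos by (simp add: sum_nonneg)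

lemma V_deriv: "t > t0 \<Longrightarrow> (V has_real_derivative (\<Sum>i\<in>UNIV. y i t * F i t)) (at t)"
proof -
  assume "t > t0"
  have "\<And>i. ((\<lambda>\<tau>. Phi (s i) (x \<tau> i)) has_real_derivative y i t * F i t) (at t)"
    unfolding y_def using DERIV_chain2[OF Phi_deriv[OF spos] deriv_at[OF \<open>t > t0\<close>]] by simp
  then show ?thesis unfolding V_def[abs_def] by (intro DERIV_sum) auto
qed

lemma Vdot_eq: "(\<Sum>i\<in>UNIV. y i t * F i t) = - (\<Sum>i\<in>UNIV. \<Sum>j\<in>UNIV. \<alpha> i j * (y i t - y j t)^2) / 2"
proof -
  define S1 where "S1 = (\<Sum>i\<in>UNIV. \<Sum>j\<in>UNIV. \<alpha> i j * (y i t * (y j t - y i t)))"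
  have e1: "(\<Sum>i\<in>UNIV. y i t * F i t) = S1"
    unfolding S1_def F_def
  proof (intro sum.cong refl)
    fix i
    have "y i t * (\<Sum>j\<in>UNIV. \<alpha> i j * (y j t - y i t)) = (\<Sum>j\<in>UNIV. y i t * (\<alpha> i j * (y j t - y i t)))"
      by (rule sum_distrib_left)
    also have "\<dots> = (\<Sum>j\<in>UNIV. \<alpha> i j * (y i t * (y j t - y i t)))"
      by (intro sum.cong refl) (simp only: mult.left_commute)
    finally show "y i t * (\<Sum>j\<in>UNIV. \<alpha> i j * (y j t - y i t)) = (\<Sum>j\<in>UNIV. \<alpha> i j * (y i t * (y j t - y i t)))" .
  qed
  have e2: "S1 = (\<Sum>i\<in>UNIV. \<Sum>j\<in>UNIV. \<alpha> i j * (y j t * (y i t - y j t)))"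
  proof -
    have "S1 = (\<Sum>j\<in>UNIV. \<Sum>i\<in>UNIV. \<alpha> i j * (y i t * (y j t - y i t)))"
      unfolding S1_def by (rule sum.swap)
    also have "\<dots> = (\<Sum>j\<in>UNIV. \<Sum>i\<in>UNIV. \<alpha> j i * (y i t * (y j t - y i t)))"
      by (intro sum.cong refl) (metis symm)
    finally show ?thesis .
  qed
  have "2 * S1 = S1 + S1" by simp
  also have "\<dots> = (\<Sum>i\<in>UNIV. \<Sum>j\<in>UNIV. \<alpha> i j * (y i t * (y j t - y i t)) + \<alpha> i j * (y j t * (y i t - y j t)))"
    apply (subst (2) e2) unfolding S1_def by (simp only: sum.distrib)
  also have "\<dots> = (\<Sum>i\<in>UNIV. \<Sum>j\<in>UNIV. - (\<alpha> i j * (y i t - y j t)^2))"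
    by (intro sum.cong refl) (simp add: power2_eq_square algebra_simps)
  also have "\<dots> = - (\<Sum>i\<in>UNIV. \<Sum>j\<in>UNIV. \<alpha> i j * (y i t - y j t)^2)"
    by (simp add: sum_negf)
  finally show ?thesis using e1 by simp
qed

lemma Vdot_le: "(\<Sum>i\<in>UNIV. y i t * F i t) \<le> - \<alpha> k l * (y k t - y l t)^2 / 2"
proof -
  have "\<alpha> k l * (y k t - y l t)^2 \<le> (\<Sum>j\<in>UNIV. \<alpha> k j * (y k t - y j t)^2)"
    by (rule member_le_sum[where f="\<lambda>j. \<alpha> k j * (y k t - y j t)^2"]) (auto simp: nonneg)
  also have "\<dots> \<le> (\<Sum>i\<in>UNIV. \<Sum>j\<in>UNIV. \<alpha> i j * (y i t - y j t)^2)"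
    by (rule member_le_sum[where f="\<lambda>i. \<Sum>j\<in>UNIV. \<alpha> i j * (y i t - y j t)^2"])
      (auto simp: nonneg intro!: sum_nonneg)
  finally show ?thesis unfolding Vdot_eq by simp
qed

lemma Vdot_nonpos: "(\<Sum>i\<in>UNIV. y i t * F i t) \<le> 0"
proof -
  have "(\<Sum>i\<in>UNIV. \<Sum>j\<in>UNIV. \<alpha> i j * (y i t - y j t)^2) \<ge> 0"
    by (auto simp: nonneg intro!: sum_nonneg)
  then show ?thesis unfolding Vdot_eq by simp
qed

lemma V_mono: "t0 < t \<Longrightarrow> t \<le> u \<Longrightarrow> V u \<le> V t"
proof -
  assume a: "t0 < t" "t \<le> u"
  show ?thesis
  proof (rule DERIV_nonpos_imp_nonincreasing[OF a(2)])
    fix z assume "t \<le> z" "z \<le> u"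
    then have "t0 < z" using a by auto
    then show "\<exists>y. (V has_real_derivative y) (at z) \<and> y \<le> 0"
      using V_deriv Vdot_nonpos by blast
  qed
qed

end

context sys begin

lemma edge_conv:
  assumes akl: "\<alpha> k l > 0"
  shows "((\<lambda>t. y k t - y l t) \<longlongrightarrow> 0) at_top"
proof (rule ccontr)
  assume nc: "\<not> ?thesis"
  obtain \<eta> where \<eta>: "\<eta> > 0" "\<And>T. \<exists>t\<ge>T. \<bar>y k t - y l t\<bar> \<ge> \<eta>"
  proof -
    from nc obtain \<eta> where "\<eta> > 0" "\<not> eventually (\<lambda>t. dist (y k t - y l t) 0 < \<eta>) at_top"
      unfolding tendsto_iff by auto
    then show ?thesis using that
      by (auto simp: eventually_at_top_linorder not_less dist_real_def)
  qed
  define h where "h = \<eta> / (4 * B)"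
  define c where "c = \<alpha> k l * (\<eta>/2)^2 / 2"
  have hpos: "h > 0" unfolding h_def using \<eta>(1) B_pos by simp
  have cpos: "c > 0" unfolding c_def using \<eta>(1) akl by simp
  have Bh: "B * h = \<eta> / 4" unfolding h_def using B_pos by simp
  define L where "L = Inf (V ` {t0+1..})"
  have bdd: "bdd_below (V ` {t0+1..})" by (rule bdd_belowI2[where m=0]) (rule V_nonneg)
  have "Inf (V ` {t0+1..}) < L + c*h/2" unfolding L_def using cpos hpos by simp
  then obtain T where T: "T \<ge> t0 + 1" "V T < L + c*h/2"
    using cInf_less_iff[of "V ` {t0+1..}"] bdd by auto
  obtain t where t: "t \<ge> T" "\<bar>y k t - y l t\<bar> \<ge> \<eta>" using \<eta>(2) by blast
  have tt0: "t0 < t" using T t by auto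
  have low: "(y k u - y l u)^2 \<ge> (\<eta>/2)^2" if u: "t \<le> u" "u \<le> t + h" for u
  proof -
    have a: "\<bar>y k u - y k t\<bar> \<le> B*(u - t)" "\<bar>y l u - y l t\<bar> \<le> B*(u-t)"
      using y_lip tt0 u by auto
    have "B*(u-t) \<le> B*h" using B_pos u by (simp add: mult_left_mono)
    then have "\<bar>y k u - y l u\<bar> \<ge> \<eta>/2" using a Bh t(2) by linarith
    then have "\<bar>\<eta>/2\<bar> \<le> \<bar>y k u - y l u\<bar>" using \<eta>(1) by simp
    then show ?thesis by (simp only: abs_le_square_iff)
  qed
  have dec: "V (t+h) + c*(t+h) \<le> V t + c*t"
  proof (rule DERIV_nonpos_imp_nonincreasing[where f="\<lambda>u. V u + c*u"])
    show "t \<le> t + h" using hpos by simp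
  next
    fix z assume z: "t \<le> z" "z \<le> t + h"
    have d: "((\<lambda>u. V u + c*u) has_real_derivative (\<Sum>i\<in>UNIV. y i z * F i z) + c*1) (at z)"
      using V_deriv[of z] z tt0 by (auto intro!: derivative_intros)
    have "\<alpha> k l * (\<eta>/2)^2 \<le> \<alpha> k l * (y k z - y l z)^2"
      using low[OF z] akl by (simp add: mult_left_mono)
    then have "(\<Sum>i\<in>UNIV. y i z * F i z) + c*1 \<le> 0"
      using Vdot_le[of z k l] unfolding c_def by simp
    then show "\<exists>y. ((\<lambda>u. V u + c*u) has_real_derivative y) (at z) \<and> y \<le> 0"
      using d by blast
  qed
  have "V t \<le> V T" using V_mono[of T t] T t by simp
  moreover have "L \<le> V (t+h)" unfolding L_def
    by (rule cInf_lower[OF _ bdd]) (use T t hpos in auto)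
  moreover have "c*(t+h) = c*t + c*h" by (simp add: algebra_simps)
  moreover have "c*h > 0" using cpos hpos by simp
  ultimately show False using dec T by linarith
qed

lemma all_conv:
  assumes conn: "graph_connected \<alpha>"
  shows "((\<lambda>t. y i t - y j t) \<longlongrightarrow> 0) at_top"
proof -
  have "(\<lambda>a b. \<alpha> a b > 0)\<^sup>*\<^sup>* i j" using conn unfolding graph_connected_def by blast
  then show ?thesis
  proof (induction rule: rtranclp_induct)
    case base then show ?case by simp
  next
    case (step b c)
    have "((\<lambda>t. (y i t - y b t) + (y b t - y c t)) \<longlongrightarrow> 0 + 0) at_top"
      using step.IH edge_conv[OF step.hyps(2)] by (rule tendsto_add)
    then show ?case by simp
  qed
qed

end

lemma card_pos: "real (card (UNIV :: 'i::finite set)) \<ge> 1"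
proof -
  have "card (UNIV :: 'i set) > 0" by (simp add: finite_UNIV_card_ge_0)
  then show ?thesis by simp
qed

lemma Min_le_s: "Min (range (s :: 'i::finite \<Rightarrow> real)) \<le> s j"
  by (rule Min_le) auto

lemma sat_pos_le: "s \<ge> 0 \<Longrightarrow> sat s a > 0 \<Longrightarrow> sat s a \<le> a"
  by (auto simp: sat_alt max_def min_def split: if_splits)

lemma static_pos:
  fixes x s :: "'i::finite \<Rightarrow> real"
  assumes spos: "\<And>i. s i > 0"
    and sum: "(\<Sum>j\<in>UNIV. x j) = real (card (UNIV::'i set)) * C"
    and Cle: "C \<le> Min (range s)"
    and d: "\<And>i j. \<bar>sat (s i) (x i) - sat (s j) (x j)\<bar> \<le> d"
    and dlt: "d < Min (range s)" and k: "x k > s k"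
  shows "\<bar>x i - C\<bar> \<le> real (card (UNIV::'i set)) * d"
proof -
  let ?m = "Min (range s)" and ?N = "real (card (UNIV::'i set))"
  have yk: "sat (s k) (x k) = s k" using k spos[of k] by (simp add: sat_alt)
  have dpos: "d \<ge> 0" using d[of i i] by simp
  have xlow: "x j \<ge> C - d" for j
  proof -
    have "sat (s j) (x j) \<ge> ?m - d" using d[of k j] yk Min_le_s[of s k] by linarith
    moreover have "?m - d > 0" using dlt by simp
    ultimately have "sat (s j) (x j) \<le> x j" using spos[of j] sat_pos_le[of "s j" "x j"] by linarith
    with \<open>sat (s j) (x j) \<ge> ?m - d\<close> have "x j \<ge> ?m - d" by linarith
    then show ?thesis using Cle by linarith
  qed
  have "(\<Sum>j\<in>UNIV. x j - (C - d)) = ?N * C - ?N * (C - d)"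
    by (simp add: sum_subtractf sum)
  also have "\<dots> = ?N * d" by (simp add: algebra_simps)
  finally have S: "(\<Sum>j\<in>UNIV. x j - (C - d)) = ?N * d" .
  have "x i - (C - d) \<le> (\<Sum>j\<in>UNIV. x j - (C - d))"
    by (rule member_le_sum) (use xlow in auto)
  then have up: "x i - C \<le> ?N * d" using S dpos by linarith
  have "d \<le> ?N * d" using card_pos[where 'i='i] dpos by (simp add: mult_le_cancel_right1)
  then show ?thesis using up xlow[of i] by linarith
qed

lemma sat_neg: "s \<ge> 0 \<Longrightarrow> sat s (- a) = - sat s a"
  by (auto simp: sat_alt max_def min_def)

lemma static_all:
  fixes x s :: "'i::finite \<Rightarrow> real"
  assumes spos: "\<And>i. s i > 0"
    and sum: "(\<Sum>j\<in>UNIV. x j) = real (card (UNIV::'i set)) * C"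
    and Cle: "\<bar>C\<bar> \<le> Min (range s)"
    and d: "\<And>i j. \<bar>sat (s i) (x i) - sat (s j) (x j)\<bar> \<le> d"
    and dlt: "d < Min (range s)"
  shows "\<bar>x i - C\<bar> \<le> real (card (UNIV::'i set)) * d"
proof -
  let ?N = "real (card (UNIV::'i set))"
  consider k where "x k > s k" | k where "x k < - s k" | "\<forall>k. - s k \<le> x k \<and> x k \<le> s k"
    by (meson not_le)
  then show ?thesis
  proof cases
    case 1
    have Cle': "C \<le> Min (range s)" using Cle by linarith
    show ?thesis by (rule static_pos[OF spos sum Cle' d dlt 1])
  next
    case 2
    have sum': "(\<Sum>j\<in>UNIV. - x j) = ?N * (- C)" using sum by (simp add: sum_negf)
    have d': "\<bar>sat (s i) (- x i) - sat (s j) (- x j)\<bar> \<le> d" for i j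
      using d[of i j] spos[of i] spos[of j] by (simp add: sat_neg less_imp_le)
    have Cle'': "- C \<le> Min (range s)" using Cle by linarith
    have "\<bar>- x i - - C\<bar> \<le> ?N * d"
      by (rule static_pos[OF spos sum' Cle'' d' dlt, of k]) (use 2 in linarith)
    then show ?thesis by simp
  next
    case 3
    then have yx: "sat (s j) (x j) = x j" for j using spos[of j] by (auto simp: sat_alt)
    have dpos: "d \<ge> 0" using d[of i i] by simp
    have "?N * x i - ?N * C = (\<Sum>j\<in>UNIV. x i - x j)"
      by (simp add: sum_subtractf sum)
    then have "\<bar>?N * x i - ?N * C\<bar> \<le> (\<Sum>j\<in>UNIV. \<bar>x i - x j\<bar>)"
      by (simp add: sum_abs)
    also have "\<dots> \<le> (\<Sum>j\<in>(UNIV::'i set). d)"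
    proof (rule sum_mono)
      fix j :: 'i
      show "\<bar>x i - x j\<bar> \<le> d" using d[of i j] yx[of i] yx[of j] by simp
    qed
    also have "\<dots> = ?N * d" by simp
    finally have "?N * \<bar>x i - C\<bar> \<le> ?N * d"
      by (simp add: abs_mult right_diff_distrib[symmetric])
    then have "\<bar>x i - C\<bar> \<le> d" using card_pos[where 'i='i] by simp
    moreover have "d \<le> ?N * d" using card_pos[where 'i='i] dpos by (simp add: mult_le_cancel_right1)
    ultimately show ?thesis by linarith
  qed
qed

theorem theorem1:
  fixes \<alpha> :: "'i::finite \<Rightarrow> 'i \<Rightarrow> real"
    and s :: "'i \<Rightarrow> real"
    and t0 :: real
    and x :: "real \<Rightarrow> 'i \<Rightarrow> real"
  assumes sym: "\<And>i j. \<alpha> i j = \<alpha> j i"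
    and nonneg: "\<And>i j. \<alpha> i j \<ge> 0"
    and conn: "graph_connected \<alpha>"
    and spos: "\<And>i. s i > 0"
    and sol: "is_solution \<alpha> s t0 x"
    and noncons: "\<exists>i j. x t0 i \<noteq> x t0 j"
  shows "achieves_consensus x \<longleftrightarrow>
           \<bar>\<Sum>i\<in>UNIV. x t0 i\<bar> / real (card (UNIV :: 'i set)) \<le> Min (range s)"
proof -
  interpret sys \<alpha> s t0 x using sym nonneg spos sol by unfold_locales auto
  define N where "N = real (card (UNIV :: 'i set))"
  have Npos: "N \<ge> 1" unfolding N_def by (rule card_pos)
  define C where "C = (\<Sum>i\<in>UNIV. x t0 i) / N"
  have sumC: "(\<Sum>i\<in>UNIV. x t i) = N * C" if "t \<ge> t0" for t
    using sum_const[OF that] Npos unfolding C_def by simp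
  define m where "m = Min (range s)"
  have absC: "\<bar>\<Sum>i\<in>UNIV. x t0 i\<bar> / N = \<bar>C\<bar>" unfolding C_def using Npos by simp
  have "Min (range s) \<in> range s" by (rule Min_in) auto
  then obtain k where "Min (range s) = s k" by (rule rangeE)
  then have k: "s k = m" unfolding m_def by simp
  have mpos: "m > 0" using spos[of k] k by simp
  have mle: "m \<le> s j" for j unfolding m_def by (rule Min_le_s)
  have yconv: "((\<lambda>t. y i t - y j t) \<longlongrightarrow> 0) at_top" for i j using all_conv[OF conn] .
  have yalt: "y i t = max (- s i) (min (x t i) (s i))" for i t
    using spos[of i] by (simp add: y_def sat_alt)
  have goal: "achieves_consensus x \<longleftrightarrow> \<bar>C\<bar> \<le> m"
  proof
    assume cons: "achieves_consensus x"
    then obtain C' where C': "\<And>i. ((\<lambda>t. x t i) \<longlongrightarrow> C') at_top"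
      unfolding achieves_consensus_def by blast
    have l1: "((\<lambda>t. \<Sum>i\<in>UNIV. x t i) \<longlongrightarrow> (\<Sum>i\<in>(UNIV::'i set). C')) at_top"
      by (intro tendsto_sum C')
    have l2: "((\<lambda>t. \<Sum>i\<in>UNIV. x t i) \<longlongrightarrow> N * C) at_top"
      by (rule tendsto_eventually, rule eventually_mono[OF eventually_ge_at_top[of t0]]) (rule sumC)
    have "(\<Sum>i\<in>(UNIV::'i set). C') = N * C"
      using tendsto_unique[OF _ l1 l2] by simp
    then have CC: "C' = C" unfolding N_def using Npos[unfolded N_def] by simp
    have xC: "((\<lambda>t. x t i) \<longlongrightarrow> C) at_top" for i using C'[of i] CC by simp
    show "\<bar>C\<bar> \<le> m"
    proof (rule ccontr)
      assume "\<not> \<bar>C\<bar> \<le> m"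
      then have Cm: "\<bar>C\<bar> > m" by simp
      have ysat: "((\<lambda>t. y i t) \<longlongrightarrow> max (- s i) (min C (s i))) at_top" for i
        unfolding yalt by (intro tendsto_intros xC)
      have eqsat: "max (- s i) (min C (s i)) = max (- s j) (min C (s j))" for i j
      proof -
        have "((\<lambda>t. y i t - y j t) \<longlongrightarrow> max (- s i) (min C (s i)) - max (- s j) (min C (s j))) at_top"
          by (intro tendsto_diff ysat)
        from tendsto_unique[OF _ this yconv[of i j]] show ?thesis by simp
      qed
      have hom: "s j = m" for j
        using eqsat[of j k] k Cm mle[of j] spos[of j] mpos
        by (cases "C > 0") (auto simp: max_def min_def split: if_splits)
      define g where "g = \<bar>C\<bar> - m"
      have gpos: "g > 0" unfolding g_def using Cm by simp
      define good where "good t \<longleftrightarrow> (\<forall>i. \<bar>x t i - C\<bar> < g)" for t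
      have ygood: "y j t = (if C > 0 then m else - m)" if "good t" for j t
      proof -
        have "\<bar>x t j - C\<bar> < \<bar>C\<bar> - m" using that unfolding good_def g_def by blast
        then show ?thesis unfolding yalt hom using mpos
          by (cases "C > 0") (auto simp: max_def min_def abs_less_iff)
      qed
      have Fgood: "F i t = 0" if "good t" for i t
        unfolding F_def using ygood[OF that] by simp
      have Z: "x u i = C" if a: "a \<ge> t0" "\<And>u. u \<ge> a \<Longrightarrow> good u" and u: "u \<ge> a" for a u i
      proof -
        have "\<exists>c. \<forall>v\<in>{a..}. x v i = c"
        proof (rule has_field_derivative_zero_constant)
          fix v assume v: "v \<in> {a..}"
          have "((\<lambda>\<tau>. x \<tau> i) has_real_derivative F i v) (at v within {t0..})"
            using deriv_within[of v i] v a by auto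
          then have "((\<lambda>\<tau>. x \<tau> i) has_real_derivative F i v) (at v within {a..})"
            by (rule DERIV_subset) (use a in auto)
          then show "((\<lambda>\<tau>. x \<tau> i) has_real_derivative 0) (at v within {a..})"
            using Fgood[OF a(2), of v i] v by simp
        qed simp
        then obtain c where c: "\<And>v. v \<ge> a \<Longrightarrow> x v i = c" by auto
        have "((\<lambda>t. x t i) \<longlongrightarrow> c) at_top"
          by (rule tendsto_eventually, rule eventually_mono[OF eventually_ge_at_top[of a]]) (rule c)
        then have "c = C" using tendsto_unique[OF _ _ xC[of i]] by simp
        then show ?thesis using c[OF u] by simp
      qed
      have "eventually good at_top" unfolding good_def
      proof (intro eventually_all_finite)
        fix i
        show "eventually (\<lambda>t. \<bar>x t i - C\<bar> < g) at_top"
          using xC[of i] gpos unfolding tendsto_iff dist_real_def by blast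
      qed
      then obtain T0 where T0: "\<And>u. u \<ge> T0 \<Longrightarrow> good u"
        unfolding eventually_at_top_linorder by blast
      define S where "S = {t. t0 \<le> t \<and> (\<forall>u\<ge>t. good u)}"
      have TS: "max T0 t0 \<in> S" unfolding S_def using T0 by auto
      have bddS: "bdd_below S" unfolding S_def by (rule bdd_belowI[of _ t0]) auto
      define T1 where "T1 = Inf S"
      have T1ge: "t0 \<le> T1" unfolding T1_def
        by (rule cInf_greatest) (use TS in blast, simp add: S_def)
      have after: "x u i = C" if uT: "u > T1" for u i
      proof -
        have "Inf S < u" using uT unfolding T1_def .
        then obtain t where t: "t \<in> S" "t < u"
          using cInf_less_iff[of S u] TS bddS by auto
        show ?thesis by (rule Z[of t]) (use t S_def in auto)
      qed
      have atT1: "x T1 i = C" for i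
      proof -
        have "((\<lambda>u. x u i) \<longlongrightarrow> x T1 i) (at T1 within {t0..})"
          using cont[of i] T1ge unfolding continuous_on_def by auto
        then have c1: "((\<lambda>u. x u i) \<longlongrightarrow> x T1 i) (at_right T1)"
          by (rule tendsto_within_subset) (use T1ge in auto)
        have c2: "((\<lambda>u. x u i) \<longlongrightarrow> C) (at_right T1)"
          by (rule tendsto_eventually, rule eventually_mono[OF eventually_at_right_less[of T1]]) (rule after)
        show ?thesis using tendsto_unique[OF _ c1 c2] by simp
      qed
      have goodT1: "good T1" unfolding good_def using atT1 gpos by simp
      have T1S: "T1 \<in> S" unfolding S_def
      proof (intro CollectI conjI allI impI)
        fix u assume "T1 \<le> u"
        then show "good u"
        proof (cases "u = T1")
          case False
          then have "u > T1" using \<open>T1 \<le> u\<close> by simp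
          then show ?thesis unfolding good_def using after gpos by simp
        qed (use goodT1 in simp)
      qed (rule T1ge)
      show False
      proof (cases "T1 = t0")
        case True
        then have "x t0 i = C" for i using atT1 by simp
        then show False using noncons by simp
      next
        case False
        then have T1gt: "T1 > t0" using T1ge by simp
        have "eventually good (at T1)" unfolding good_def
        proof (intro eventually_all_finite)
          fix i
          have "isCont (\<lambda>u. x u i) T1" by (rule DERIV_isCont[OF deriv_at[OF T1gt]])
          then have "((\<lambda>u. x u i) \<longlongrightarrow> C) (at T1)" using atT1[of i] unfolding isCont_def by simp
          then show "eventually (\<lambda>u. \<bar>x u i - C\<bar> < g) (at T1)"
            using gpos unfolding tendsto_iff dist_real_def by blast
        qed
        then obtain d where d: "d > 0" "\<And>u. u \<noteq> T1 \<Longrightarrow> dist u T1 < d \<Longrightarrow> good u"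
          unfolding eventually_at by auto
        define a where "a = max t0 (T1 - d/2)"
        have "a \<in> S" unfolding S_def
        proof (intro CollectI conjI allI impI)
          show "t0 \<le> a" unfolding a_def by simp
        next
          fix u assume u: "a \<le> u"
          consider "u = T1" | "u > T1" | "u < T1" by linarith
          then show "good u"
          proof cases
            case 1 then show ?thesis using goodT1 by simp
          next
            case 2 then show ?thesis unfolding good_def using after gpos by simp
          next
            case 3
            then have "dist u T1 < d" using u d(1) unfolding a_def dist_real_def by auto
            then show ?thesis using d(2) 3 by simp
          qed
        qed
        then have "T1 \<le> a" unfolding T1_def by (rule cInf_lower[OF _ bddS])
        moreover have "a < T1" unfolding a_def using T1gt d(1) by simp
        ultimately show False by simp
      qed
    qed
  next
    assume Cle: "\<bar>C\<bar> \<le> m"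
    show "achieves_consensus x" unfolding achieves_consensus_def
    proof (intro exI allI)
      fix i
      define \<delta> where "\<delta> t = (\<Sum>a\<in>UNIV. \<Sum>b\<in>UNIV. \<bar>y a t - y b t\<bar>)" for t
      have \<delta>0: "(\<delta> \<longlongrightarrow> 0) at_top" unfolding \<delta>_def
        by (intro tendsto_null_sum tendsto_rabs_zero yconv)
      have \<delta>b: "\<bar>y a t - y b t\<bar> \<le> \<delta> t" for a b t
      proof -
        have "\<bar>y a t - y b t\<bar> \<le> (\<Sum>b\<in>UNIV. \<bar>y a t - y b t\<bar>)"
          by (rule member_le_sum[where f="\<lambda>b. \<bar>y a t - y b t\<bar>"]) auto
        also have "\<dots> \<le> \<delta> t" unfolding \<delta>_def
          by (rule member_le_sum[where f="\<lambda>a. \<Sum>b\<in>UNIV. \<bar>y a t - y b t\<bar>"]) (auto intro: sum_nonneg)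
        finally show ?thesis .
      qed
      have ev: "eventually (\<lambda>t. norm (x t i - C) \<le> N * \<delta> t) at_top"
        using order_tendstoD(2)[OF \<delta>0 mpos] eventually_ge_at_top[of t0]
      proof eventually_elim
        case (elim t)
        have "\<bar>x t i - C\<bar> \<le> real (card (UNIV::'i set)) * \<delta> t"
        proof (rule static_all[where s=s])
          show "\<And>i. 0 < s i" by (rule spos)
          show "(\<Sum>j\<in>UNIV. x t j) = real (card (UNIV::'i set)) * C" using sumC[OF elim(2)] N_def by simp
          show "\<bar>C\<bar> \<le> Min (range s)" using Cle m_def by simp
          show "\<And>i j. \<bar>sat (s i) (x t i) - sat (s j) (x t j)\<bar> \<le> \<delta> t" using \<delta>b unfolding y_def by blast
          show "\<delta> t < Min (range s)" using elim(1) m_def by simp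
        qed
        then show ?case unfolding N_def by simp
      qed
      have "((\<lambda>t. x t i - C) \<longlongrightarrow> 0) at_top"
        by (rule Lim_null_comparison[OF ev]) (intro tendsto_mult_right_zero \<delta>0)
      then show "((\<lambda>t. x t i) \<longlongrightarrow> C) at_top" by (rule LIM_zero_cancel)
    qed
  qed
  show ?thesis unfolding N_def[symmetric] absC m_def[symmetric] by (rule goal)
qed

end
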